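(* Let $\mathfrak{b}_6$ be a butterfly algebra. Then there is a vector space decomposition $\mathfrak{b}_6=\mathfrak{v}\oplus[\mathfrak{b}_6,\mathfrak{b}_6]$ in which the subspaces $\mathfrak{v}$ and $[\mathfrak{b}_6,\mathfrak{b}_6]$ are totally isotropic and dual to each other with respect to $(\cdot,\cdot)$. In particular, $(\cdot,\cdot)$ is non-degenerate of signature $(3,3)$.
   Context: A butterfly algebra is a real 2-step nilpotent Lie algebra $\mathfrak{b}_6$ (i.e. $[\mathfrak{b}_6,[\mathfrak{b}_6,\mathfrak{b}_6]]=0$) of dimension $6$, endowed with a symmetric bilinear form $(\cdot,\cdot)$ that is invariant, i.e. $([X,Y],Z)=-(Y,[X,Z])$ for all $X,Y,Z$, such that there exists $Z\in[\mathfrak{b}_6,\mathfrak{b}_6]$ not lying in the radical $\mathfrak{r}=\{X\in\mathfrak{b}_6\mid (X,\mathfrak{b}_6)=0\}$. *)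

theory Defs
  imports "HOL-Analysis.Analysis"
begin

definition lie_algebra :: "('a::real_vector \<Rightarrow> 'a \<Rightarrow> 'a) \<Rightarrow> bool" where
  "lie_algebra br \<longleftrightarrow> bilinear br \<and> (\<forall>x. br x x = 0) \<and>
     (\<forall>x y z. br x (br y z) + br y (br z x) + br z (br x y) = 0)"

definition derived :: "('a::real_vector \<Rightarrow> 'a \<Rightarrow> 'a) \<Rightarrow> 'a set" where
  "derived br = span {br x y | x y. True}"

definition two_step_nilpotent :: "('a::real_vector \<Rightarrow> 'a \<Rightarrow> 'a) \<Rightarrow> bool" where
  "two_step_nilpotent br \<longleftrightarrow> (\<forall>x. \<forall>y\<in>derived br. br x y = 0)"

definition symmetric_form :: "('a \<Rightarrow> 'a \<Rightarrow> real) \<Rightarrow> bool" where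
  "symmetric_form B \<longleftrightarrow> (\<forall>x y. B x y = B y x)"

definition invariant_form :: "('a \<Rightarrow> 'a \<Rightarrow> real) \<Rightarrow> ('a \<Rightarrow> 'a \<Rightarrow> 'a) \<Rightarrow> bool" where
  "invariant_form B br \<longleftrightarrow> (\<forall>X Y Z. B (br X Y) Z = - B Y (br X Z))"

definition radical :: "('a \<Rightarrow> 'a \<Rightarrow> real) \<Rightarrow> 'a set" where
  "radical B = {X. \<forall>Y. B X Y = 0}"

text \<open>Butterfly algebra (dimension 6 is imposed separately via DIM).\<close>
definition butterfly :: "('a::real_vector \<Rightarrow> 'a \<Rightarrow> 'a) \<Rightarrow> ('a \<Rightarrow> 'a \<Rightarrow> real) \<Rightarrow> bool" where
  "butterfly br B \<longleftrightarrow> lie_algebra br \<and> two_step_nilpotent br \<and> bilinear B \<and>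
     symmetric_form B \<and> invariant_form B br \<and> (\<exists>Z\<in>derived br. Z \<notin> radical B)"

definition totally_isotropic :: "('a \<Rightarrow> 'a \<Rightarrow> real) \<Rightarrow> 'a set \<Rightarrow> bool" where
  "totally_isotropic B S \<longleftrightarrow> (\<forall>x\<in>S. \<forall>y\<in>S. B x y = 0)"

definition dual_pair :: "('a::real_vector \<Rightarrow> 'a \<Rightarrow> real) \<Rightarrow> 'a set \<Rightarrow> 'a set \<Rightarrow> bool" where
  "dual_pair B S T \<longleftrightarrow> (\<forall>x\<in>S. (\<forall>y\<in>T. B x y = 0) \<longrightarrow> x = 0) \<and>
                        (\<forall>y\<in>T. (\<forall>x\<in>S. B x y = 0) \<longrightarrow> y = 0)"

definition nondegenerate :: "('a::real_vector \<Rightarrow> 'a \<Rightarrow> real) \<Rightarrow> bool" where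
  "nondegenerate B \<longleftrightarrow> radical B = {0}"

definition pos_index :: "('a::euclidean_space \<Rightarrow> 'a \<Rightarrow> real) \<Rightarrow> nat" where
  "pos_index B = Max {dim S | S. subspace S \<and> (\<forall>x\<in>S. x \<noteq> 0 \<longrightarrow> B x x > 0)}"

definition neg_index :: "('a::euclidean_space \<Rightarrow> 'a \<Rightarrow> real) \<Rightarrow> nat" where
  "neg_index B = Max {dim S | S. subspace S \<and> (\<forall>x\<in>S. x \<noteq> 0 \<longrightarrow> B x x < 0)}"

definition signature :: "('a::euclidean_space \<Rightarrow> 'a \<Rightarrow> real) \<Rightarrow> nat \<times> nat" where
  "signature B = (pos_index B, neg_index B)"

end

theory Submission
  imports Defs
begin


lemma subspace_orth:
  assumes "bilinear B"
  shows "subspace {x. \<forall>q\<in>T. B x q = 0}"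
  using assms unfolding subspace_def
  by (auto simp: bilinear_ladd bilinear_lmul bilinear_lzero)

lemma subspace_orth_r:
  assumes "bilinear B"
  shows "subspace {x. B p x = 0}"
  using assms unfolding subspace_def
  by (auto simp: bilinear_radd bilinear_rmul bilinear_rzero)

lemma iso_span:
  assumes "bilinear B" and "\<forall>p\<in>S. \<forall>q\<in>T. B p q = 0"
  shows "\<forall>p\<in>span S. \<forall>q\<in>span T. B p q = 0"
proof
  fix p assume p: "p \<in> span S"
  show "\<forall>q\<in>span T. B p q = 0"
  proof (rule span_induct[OF p, where P="\<lambda>p. \<forall>q\<in>span T. B p q = 0"])
    show "subspace {p. \<forall>q\<in>span T. B p q = 0}" by (rule subspace_orth[OF assms(1)])
  next
    fix x assume x: "x \<in> S"
    show "\<forall>q\<in>span T. B x q = 0"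
    proof
      fix q assume q: "q \<in> span T"
      show "B x q = 0"
        by (rule span_induct[OF q, where P="\<lambda>q. B x q = 0"])
           (use subspace_orth_r[OF assms(1)] assms(2) x in auto)
    qed
  qed
qed

lemma span3:
  assumes "x \<in> span {a, b, c}"
  shows "\<exists>p q r. x = p *\<^sub>R a + q *\<^sub>R b + r *\<^sub>R c"
proof (rule span_induct[OF assms, where P="\<lambda>x. \<exists>p q r. x = p *\<^sub>R a + q *\<^sub>R b + r *\<^sub>R c"])
  show "subspace {x. \<exists>p q r. x = p *\<^sub>R a + q *\<^sub>R b + r *\<^sub>R c}"
    unfolding subspace_def
  proof (intro conjI ballI allI)
    show "0 \<in> {x. \<exists>p q r. x = p *\<^sub>R a + q *\<^sub>R b + r *\<^sub>R c}"
      by (auto intro!: exI[where x=0])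
  next
    fix x y assume "x \<in> {x. \<exists>p q r. x = p *\<^sub>R a + q *\<^sub>R b + r *\<^sub>R c}"
      "y \<in> {x. \<exists>p q r. x = p *\<^sub>R a + q *\<^sub>R b + r *\<^sub>R c}"
    then obtain p q r p' q' r' where "x = p *\<^sub>R a + q *\<^sub>R b + r *\<^sub>R c"
      "y = p' *\<^sub>R a + q' *\<^sub>R b + r' *\<^sub>R c" by auto
    then have "x + y = (p+p') *\<^sub>R a + (q+q') *\<^sub>R b + (r+r') *\<^sub>R c"
      by (simp add: algebra_simps)
    then show "x + y \<in> {x. \<exists>p q r. x = p *\<^sub>R a + q *\<^sub>R b + r *\<^sub>R c}"
      by blast
  next
    fix k x assume "x \<in> {x. \<exists>p q r. x = p *\<^sub>R a + q *\<^sub>R b + r *\<^sub>R c}"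
    then obtain p q r where "x = p *\<^sub>R a + q *\<^sub>R b + r *\<^sub>R c" by auto
    then have "k *\<^sub>R x = (k*p) *\<^sub>R a + (k*q) *\<^sub>R b + (k*r) *\<^sub>R c"
      by (simp add: algebra_simps)
    then show "k *\<^sub>R x \<in> {x. \<exists>p q r. x = p *\<^sub>R a + q *\<^sub>R b + r *\<^sub>R c}"
      by blast
  qed
next
  fix x assume "x \<in> {a, b, c}"
  then show "\<exists>p q r. x = p *\<^sub>R a + q *\<^sub>R b + r *\<^sub>R c"
  proof (elim insertE)
    assume "x = a" then show ?thesis by (rule_tac x=1 in exI, rule_tac x=0 in exI, rule_tac x=0 in exI) simp
  next
    assume "x = b" then show ?thesis by (rule_tac x=0 in exI, rule_tac x=1 in exI, rule_tac x=0 in exI) simp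
  next
    assume "x = c" then show ?thesis by (rule_tac x=0 in exI, rule_tac x=0 in exI, rule_tac x=1 in exI) simp
  qed simp
qed

lemma span3_mem: "p *\<^sub>R a + q *\<^sub>R b + r *\<^sub>R c \<in> span {a, b, c}"
  by (intro span_add span_scale span_base) auto

lemma indep_dual:
  fixes B :: "'a::real_vector \<Rightarrow> 'a \<Rightarrow> real"
  assumes "bilinear B" "finite S"
    and "\<forall>v\<in>S. \<exists>w. B v w \<noteq> 0 \<and> (\<forall>v'\<in>S. v' \<noteq> v \<longrightarrow> B v' w = 0)"
  shows "independent S"
proof
  assume "dependent S"
  then obtain u v where v: "v \<in> S" "u v \<noteq> 0" and s: "(\<Sum>v\<in>S. u v *\<^sub>R v) = 0"
    using dependent_finite[OF assms(2)] by auto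
  obtain w where w: "B v w \<noteq> 0" "\<forall>v'\<in>S. v' \<noteq> v \<longrightarrow> B v' w = 0" using assms(3) v by blast
  have lin: "linear (\<lambda>x. B x w)" using assms(1) by (simp add: bilinear_def)
  have "0 = B (\<Sum>v\<in>S. u v *\<^sub>R v) w" using s assms(1) by (simp add: bilinear_lzero)
  also have "\<dots> = (\<Sum>v'\<in>S. u v' * B v' w)"
    using linear_sum[OF lin, of "\<lambda>v. u v *\<^sub>R v" S] assms(1) by (simp add: bilinear_lmul)
  also have "\<dots> = u v * B v w + (\<Sum>v'\<in>S - {v}. u v' * B v' w)"
    using sum.remove[OF assms(2) v(1)] by simp
  also have "(\<Sum>v'\<in>S - {v}. u v' * B v' w) = 0"
    using w(2) by (intro sum.neutral) auto
  finally show False using v(2) w(1) by simp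
qed



lemma index_max:
  fixes M :: "nat set"
  assumes "3 \<in> M" "\<forall>m\<in>M. m \<le> 3"
  shows "Max M = 3"
proof (rule Max_eqI)
  show "finite M" using assms(2) by (intro finite_subset[of M "{..3}"]) auto
qed (use assms in auto)

lemma dim_bound:
  fixes S V :: "'a::euclidean_space set"
  assumes "subspace S" "subspace V" "S \<inter> V \<subseteq> {0}" "dim V = 3" "DIM('a) = 6"
  shows "dim S \<le> 3"
proof -
  have "dim {x + y |x y. x \<in> S \<and> y \<in> V} + dim (S \<inter> V) = dim S + dim V"
    by (rule dim_sums_Int[OF assms(1,2)])
  moreover have "dim (S \<inter> V) = 0"
    using dim_subset[OF assms(3)] by simp
  moreover have "dim {x + y |x y. x \<in> S \<and> y \<in> V} \<le> 6"
    using dim_subset_UNIV[of "{x + y |x y. x \<in> S \<and> y \<in> V}"] assms(5) by simp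
  ultimately show ?thesis using assms(4) by linarith
qed



lemma hyp:
  fixes B :: "'a::euclidean_space \<Rightarrow> 'a \<Rightarrow> real"
  assumes dim6: "DIM('a) = 6" and bil: "bilinear B" and sym: "symmetric_form B"
    and uu: "\<forall>x\<in>{u1,u2,u3}. \<forall>y\<in>{u1,u2,u3}. B x y = 0"
    and ff: "\<forall>x\<in>{f1,f2,f3}. \<forall>y\<in>{f1,f2,f3}. B x y = 0"
    and uf: "B u1 f1 = 1" "B u1 f2 = 0" "B u1 f3 = 0"
            "B u2 f1 = 0" "B u2 f2 = 1" "B u2 f3 = 0"
            "B u3 f1 = 0" "B u3 f2 = 0" "B u3 f3 = 1"
  shows "subspace (span {u1,u2,u3}) \<and> span {u1,u2,u3} \<inter> span {f1,f2,f3} = {0} \<and>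
     span {u1,u2,u3} + span {f1,f2,f3} = UNIV \<and>
     totally_isotropic B (span {u1,u2,u3}) \<and> totally_isotropic B (span {f1,f2,f3}) \<and>
     dual_pair B (span {u1,u2,u3}) (span {f1,f2,f3}) \<and> nondegenerate B \<and> signature B = (3, 3)"
proof -
  have symm: "\<And>x y. B x y = B y x" using sym by (simp add: symmetric_form_def)
  have fu: "B f1 u1 = 1" "B f2 u1 = 0" "B f3 u1 = 0"
            "B f1 u2 = 0" "B f2 u2 = 1" "B f3 u2 = 0"
            "B f1 u3 = 0" "B f2 u3 = 0" "B f3 u3 = 1"
    using uf symm by metis+
  note vals = uf fu uu[simplified] ff[simplified]
  note bs = bilinear_ladd[OF bil] bilinear_radd[OF bil] bilinear_lmul[OF bil]
    bilinear_rmul[OF bil] bilinear_lsub[OF bil] bilinear_rsub[OF bil]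
    bilinear_lzero[OF bil] bilinear_rzero[OF bil]
  define U where "U = span {u1,u2,u3}"
  define F where "F = span {f1,f2,f3}"
  have isoU: "\<forall>p\<in>U. \<forall>q\<in>U. B p q = 0" unfolding U_def by (rule iso_span[OF bil uu])
  have isoF: "\<forall>p\<in>F. \<forall>q\<in>F. B p q = 0" unfolding F_def by (rule iso_span[OF bil ff])
  have fF: "f1 \<in> F" "f2 \<in> F" "f3 \<in> F" unfolding F_def by (auto intro: span_base)
  have uU: "u1 \<in> U" "u2 \<in> U" "u3 \<in> U" unfolding U_def by (auto intro: span_base)
  have coordU: "\<And>p q r. B (p *\<^sub>R u1 + q *\<^sub>R u2 + r *\<^sub>R u3) f1 = p \<and>
        B (p *\<^sub>R u1 + q *\<^sub>R u2 + r *\<^sub>R u3) f2 = q \<and> B (p *\<^sub>R u1 + q *\<^sub>R u2 + r *\<^sub>R u3) f3 = r"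
    by (simp add: bs vals)
  have coordF: "\<And>p q r. B u1 (p *\<^sub>R f1 + q *\<^sub>R f2 + r *\<^sub>R f3) = p \<and>
        B u2 (p *\<^sub>R f1 + q *\<^sub>R f2 + r *\<^sub>R f3) = q \<and> B u3 (p *\<^sub>R f1 + q *\<^sub>R f2 + r *\<^sub>R f3) = r"
    by (simp add: bs vals)
  have Uzero: "x = 0" if hx: "x \<in> U" "B x f1 = 0" "B x f2 = 0" "B x f3 = 0" for x
  proof -
    obtain p q r where x: "x = p *\<^sub>R u1 + q *\<^sub>R u2 + r *\<^sub>R u3"
      using span3 hx(1) unfolding U_def by blast
    then show ?thesis using coordU[of p q r] hx by simp
  qed
  have Fzero: "y = 0" if hy: "y \<in> F" "B u1 y = 0" "B u2 y = 0" "B u3 y = 0" for y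
  proof -
    obtain p q r where x: "y = p *\<^sub>R f1 + q *\<^sub>R f2 + r *\<^sub>R f3"
      using span3 hy(1) unfolding F_def by blast
    then show ?thesis using coordF[of p q r] hy by simp
  qed
  have subU: "subspace U" "subspace F" unfolding U_def F_def by auto
  have indU: "independent {u1,u2,u3}"
  proof (rule indep_dual[OF bil])
    show "\<forall>v\<in>{u1, u2, u3}. \<exists>w. B v w \<noteq> 0 \<and> (\<forall>v'\<in>{u1, u2, u3}. v' \<noteq> v \<longrightarrow> B v' w = 0)"
      apply (simp only: ball_simps)
      apply (intro conjI)
        apply (rule exI[where x=f1]) apply (simp add: vals)
       apply (rule exI[where x=f2]) apply (simp add: vals)
      apply (rule exI[where x=f3]) apply (simp add: vals)
      by simp
  qed simp
  have distU: "u1 \<noteq> u2" "u1 \<noteq> u3" "u2 \<noteq> u3" using vals by auto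
  have dimU: "dim U = 3" unfolding U_def
    using dim_span_eq_card_independent[OF indU] distU by simp
  have indF: "independent {f1,f2,f3}"
  proof (rule indep_dual[OF bil])
    show "\<forall>v\<in>{f1, f2, f3}. \<exists>w. B v w \<noteq> 0 \<and> (\<forall>v'\<in>{f1, f2, f3}. v' \<noteq> v \<longrightarrow> B v' w = 0)"
      apply (simp only: ball_simps)
      apply (intro conjI)
        apply (rule exI[where x=u1]) apply (simp add: vals)
       apply (rule exI[where x=u2]) apply (simp add: vals)
      apply (rule exI[where x=u3]) apply (simp add: vals)
      by simp
  qed simp
  have distF: "f1 \<noteq> f2" "f1 \<noteq> f3" "f2 \<noteq> f3" using vals by auto
  have dimF: "dim F = 3" unfolding F_def
    using dim_span_eq_card_independent[OF indF] distF by simp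
  have cap: "U \<inter> F = {0}"
  proof
    show "U \<inter> F \<subseteq> {0}"
    proof
      fix x assume x: "x \<in> U \<inter> F"
      then have "B x f1 = 0" "B x f2 = 0" "B x f3 = 0" using isoF fF by auto
      then show "x \<in> {0}" using Uzero x by auto
    qed
  qed (use subU in \<open>auto simp: subspace_0\<close>)
  have sumall: "U + F = UNIV"
  proof -
    have "dim {x + y |x y. x \<in> U \<and> y \<in> F} + dim (U \<inter> F) = dim U + dim F"
      by (rule dim_sums_Int[OF subU])
    then have d: "dim {x + y |x y. x \<in> U \<and> y \<in> F} = DIM('a)" using cap dimU dimF dim6 by simp
    have s: "subspace {x + y |x y. x \<in> U \<and> y \<in> F}" by (rule subspace_sums[OF subU])
    have "span {x + y |x y. x \<in> U \<and> y \<in> F} = UNIV" using d dim_eq_full by blast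
    then have e: "{x + y |x y. x \<in> U \<and> y \<in> F} = UNIV" using span_eq_iff[THEN iffD2, OF s] by simp
    show ?thesis
    proof (rule set_eqI)
      fix z :: 'a
      have "z \<in> {x + y |x y. x \<in> U \<and> y \<in> F}" using e by simp
      then obtain x y where "x \<in> U" "y \<in> F" "z = x + y" by blast
      then show "z \<in> U + F \<longleftrightarrow> z \<in> UNIV" using set_plus_intro by auto
    qed
  qed
  have dual: "dual_pair B U F"
    unfolding dual_pair_def
  proof (intro conjI ballI impI)
    fix x assume "x \<in> U" "\<forall>y\<in>F. B x y = 0"
    then show "x = 0" using Uzero fF by auto
  next
    fix y assume "y \<in> F" "\<forall>x\<in>U. B x y = 0"
    then show "y = 0" using Fzero uU by auto
  qed
  have nondeg: "nondegenerate B"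
    unfolding nondegenerate_def radical_def
  proof
    show "{X. \<forall>Y. B X Y = 0} \<subseteq> {0}"
    proof
      fix x assume "x \<in> {X. \<forall>Y. B X Y = 0}"
      then have x0: "\<forall>Y. B x Y = 0" by simp
      have "x \<in> U + F" using sumall by simp
      then obtain a b where ab: "a \<in> U" "b \<in> F" "x = a + b" unfolding set_plus_def by blast
      obtain p q r where a: "a = p *\<^sub>R u1 + q *\<^sub>R u2 + r *\<^sub>R u3"
        using span3 ab(1) unfolding U_def by blast
      obtain p' q' r' where b: "b = p' *\<^sub>R f1 + q' *\<^sub>R f2 + r' *\<^sub>R f3"
        using span3 ab(2) unfolding F_def by blast
      have "B x f1 = p" "B x f2 = q" "B x f3 = r" "B x u1 = p'" "B x u2 = q'" "B x u3 = r'"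
        unfolding ab(3) a b by (simp_all add: bs vals)
      then show "x \<in> {0}" using x0 ab(3) a b by simp
    qed
  qed (simp add: bs)
  have pos: "pos_index B = 3"
    unfolding pos_index_def
  proof (rule index_max)
    define P where "P = span {u1+f1, u2+f2, u3+f3}"
    have indP: "independent {u1+f1, u2+f2, u3+f3}"
    proof (rule indep_dual[OF bil])
      show "\<forall>v\<in>{u1+f1, u2+f2, u3+f3}. \<exists>w. B v w \<noteq> 0 \<and> (\<forall>v'\<in>{u1+f1, u2+f2, u3+f3}. v' \<noteq> v \<longrightarrow> B v' w = 0)"
        apply (simp only: ball_simps)
        apply (intro conjI)
          apply (rule exI[where x=u1]) apply (simp add: vals bs)
         apply (rule exI[where x=u2]) apply (simp add: vals bs)
        apply (rule exI[where x=u3]) apply (simp add: vals bs)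
        by simp
    qed simp
    have "B (u1+f1) u1 = 1" "B (u2+f2) u1 = 0" "B (u3+f3) u1 = 0"
         "B (u2+f2) u2 = 1" "B (u3+f3) u2 = 0" by (simp_all add: vals bs)
    then have distP: "u1+f1 \<noteq> u2+f2" "u1+f1 \<noteq> u3+f3" "u2+f2 \<noteq> u3+f3" by auto
    have dimP: "dim P = 3" unfolding P_def
      using dim_span_eq_card_independent[OF indP] distP by simp
    have posP: "\<forall>x\<in>P. x \<noteq> 0 \<longrightarrow> B x x > 0"
    proof (intro ballI impI)
      fix x assume x: "x \<in> P" "x \<noteq> 0"
      obtain p q r where xe: "x = p *\<^sub>R (u1+f1) + q *\<^sub>R (u2+f2) + r *\<^sub>R (u3+f3)"
        using span3 x(1) unfolding P_def by blast
      have "B x x = 2 * (p^2 + q^2 + r^2)" unfolding xe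
        by (simp add: bs vals algebra_simps power2_eq_square)
      moreover have "\<not> (p = 0 \<and> q = 0 \<and> r = 0)" using x(2) xe by auto
      ultimately show "B x x > 0"
        by (smt (verit) not_sum_power2_lt_zero sum_power2_eq_zero_iff zero_le_power2)
    qed
    show "3 \<in> {dim S |S. subspace S \<and> (\<forall>x\<in>S. x \<noteq> 0 \<longrightarrow> 0 < B x x)}"
      apply (rule CollectI)
      apply (rule exI[where x=P])
      using dimP posP unfolding P_def by simp
    show "\<forall>m\<in>{dim S |S. subspace S \<and> (\<forall>x\<in>S. x \<noteq> 0 \<longrightarrow> 0 < B x x)}. m \<le> 3"
    proof safe
      fix S :: "'a set" assume S: "subspace S" "\<forall>x\<in>S. x \<noteq> 0 \<longrightarrow> 0 < B x x"
      have "S \<inter> U \<subseteq> {0}" using S(2) isoU by fastforce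
      then show "dim S \<le> 3" using dim_bound[OF S(1) subU(1) _ dimU dim6] by blast
    qed
  qed
  have neg: "neg_index B = 3"
    unfolding neg_index_def
  proof (rule index_max)
    define P where "P = span {u1-f1, u2-f2, u3-f3}"
    have indP: "independent {u1-f1, u2-f2, u3-f3}"
    proof (rule indep_dual[OF bil])
      show "\<forall>v\<in>{u1-f1, u2-f2, u3-f3}. \<exists>w. B v w \<noteq> 0 \<and> (\<forall>v'\<in>{u1-f1, u2-f2, u3-f3}. v' \<noteq> v \<longrightarrow> B v' w = 0)"
        apply (simp only: ball_simps)
        apply (intro conjI)
          apply (rule exI[where x=u1]) apply (simp add: vals bs)
         apply (rule exI[where x=u2]) apply (simp add: vals bs)
        apply (rule exI[where x=u3]) apply (simp add: vals bs)
        by simp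
    qed simp
    have "B (u1-f1) u1 = -1" "B (u2-f2) u1 = 0" "B (u3-f3) u1 = 0"
         "B (u2-f2) u2 = -1" "B (u3-f3) u2 = 0" by (simp_all add: vals bs)
    then have distP: "u1-f1 \<noteq> u2-f2" "u1-f1 \<noteq> u3-f3" "u2-f2 \<noteq> u3-f3" by auto
    have dimP: "dim P = 3" unfolding P_def
      using dim_span_eq_card_independent[OF indP] distP by simp
    have negP: "\<forall>x\<in>P. x \<noteq> 0 \<longrightarrow> B x x < 0"
    proof (intro ballI impI)
      fix x assume x: "x \<in> P" "x \<noteq> 0"
      obtain p q r where xe: "x = p *\<^sub>R (u1-f1) + q *\<^sub>R (u2-f2) + r *\<^sub>R (u3-f3)"
        using span3 x(1) unfolding P_def by blast
      have "B x x = - 2 * (p^2 + q^2 + r^2)" unfolding xe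
        by (simp add: bs vals algebra_simps power2_eq_square)
      moreover have "\<not> (p = 0 \<and> q = 0 \<and> r = 0)" using x(2) xe by auto
      ultimately show "B x x < 0"
        by (smt (verit) not_sum_power2_lt_zero sum_power2_eq_zero_iff zero_le_power2)
    qed
    show "3 \<in> {dim S |S. subspace S \<and> (\<forall>x\<in>S. x \<noteq> 0 \<longrightarrow> B x x < 0)}"
      apply (rule CollectI)
      apply (rule exI[where x=P])
      using dimP negP unfolding P_def by simp
    show "\<forall>m\<in>{dim S |S. subspace S \<and> (\<forall>x\<in>S. x \<noteq> 0 \<longrightarrow> B x x < 0)}. m \<le> 3"
    proof safe
      fix S :: "'a set" assume S: "subspace S" "\<forall>x\<in>S. x \<noteq> 0 \<longrightarrow> B x x < 0"
      have "S \<inter> U \<subseteq> {0}" using S(2) isoU by fastforce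
      then show "dim S \<le> 3" using dim_bound[OF S(1) subU(1) _ dimU dim6] by blast
    qed
  qed
  show ?thesis
    using subU cap sumall isoU isoF dual nondeg pos neg
    unfolding U_def[symmetric] F_def[symmetric] totally_isotropic_def signature_def
    by auto
qed



lemma subspace_br:
  assumes "bilinear br" "subspace T"
  shows "subspace {x. \<forall>y. br x y \<in> T}"
  using assms unfolding subspace_def
  by (auto simp: bilinear_ladd bilinear_lmul bilinear_lzero)

lemma subspace_br_r:
  assumes "bilinear br" "subspace T"
  shows "subspace {y. br x y \<in> T}"
  using assms unfolding subspace_def
  by (auto simp: bilinear_radd bilinear_rmul bilinear_rzero)

theorem proposition5p3:
  fixes br :: "'a::euclidean_space \<Rightarrow> 'a \<Rightarrow> 'a"
    and B :: "'a \<Rightarrow> 'a \<Rightarrow> real"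
  assumes "DIM('a) = 6"
    and "butterfly br B"
  shows "(\<exists>v. subspace v \<and> v \<inter> derived br = {0} \<and> v + derived br = UNIV \<and>
              totally_isotropic B v \<and> totally_isotropic B (derived br) \<and>
              dual_pair B v (derived br))
         \<and> nondegenerate B \<and> signature B = (3, 3)"
proof -
  have lie: "lie_algebra br" and tsn: "two_step_nilpotent br" and bil: "bilinear B"
    and sym: "symmetric_form B" and inv: "invariant_form B br"
    and ex: "\<exists>Z\<in>derived br. Z \<notin> radical B"
    using assms(2) unfolding butterfly_def by auto
  have bbr: "bilinear br" and brr: "\<And>x. br x x = 0" using lie unfolding lie_algebra_def by auto
  have anti: "br x y = - br y x" for x y
  proof -
    have "br (x+y) (x+y) = br x x + br x y + br y x + br y y"
      by (simp add: bilinear_ladd[OF bbr] bilinear_radd[OF bbr] algebra_simps)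
    then have "br x y + br y x = 0" using brr[of "x+y"] brr[of x] brr[of y] by simp
    then show ?thesis by (metis eq_neg_iff_add_eq_0)
  qed
  have nil: "\<And>x y. y \<in> derived br \<Longrightarrow> br x y = 0" using tsn unfolding two_step_nilpotent_def by auto
  have nil2: "\<And>x y. x \<in> derived br \<Longrightarrow> br x y = 0" using nil anti by (metis neg_equal_0_iff_equal)
  have symm: "\<And>x y. B x y = B y x" using sym by (simp add: symmetric_form_def)
  have invr: "\<And>X Y Z. B (br X Y) Z = - B Y (br X Z)" using inv by (simp add: invariant_form_def)
  have brD: "br x y \<in> derived br" for x y unfolding derived_def by (rule span_base) auto
  have isoD: "\<forall>p\<in>derived br. \<forall>q\<in>derived br. B p q = 0"
    unfolding derived_def
  proof (rule iso_span[OF bil])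
    show "\<forall>p\<in>{br x y |x y. True}. \<forall>q\<in>{br x y |x y. True}. B p q = 0"
      using invr nil brD bilinear_rzero[OF bil] by auto
  qed
  obtain Z Y where Z: "Z \<in> derived br" "B Z Y \<noteq> 0"
    using ex unfolding radical_def by auto
  have "\<exists>a b. B (br a b) Y \<noteq> 0"
  proof (rule ccontr)
    assume "\<not> ?thesis"
    then have h: "\<forall>x\<in>{br x y |x y. True}. B x Y = 0" by auto
    have "B Z Y = 0"
      by (rule span_induct[OF Z(1)[unfolded derived_def], where P="\<lambda>p. B p Y = 0"])
        (use subspace_orth[OF bil, of "{Y}"] h in auto)
    then show False using Z(2) by simp
  qed
  then obtain a b where ab: "B (br a b) Y \<noteq> 0" by blast
  define c where "c = (1 / B (br a b) Y) *\<^sub>R Y"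
  have abc: "B (br a b) c = 1" unfolding c_def using ab by (simp add: bilinear_rmul[OF bil])
  have zl: "B (br x y) x = 0" for x y
  proof -
    have "B (br x y) x = - B y (br x x)" by (rule invr)
    then show ?thesis by (simp add: brr bilinear_rzero[OF bil])
  qed
  have zr: "B (br x y) y = 0" for x y
  proof -
    have "B (br x y) y = - B y (br x y)" by (rule invr)
    also have "B y (br x y) = B (br x y) y" by (rule symm)
    finally show ?thesis by simp
  qed
  have neg: "\<And>x y. B (- x) y = - B x y" by (rule bilinear_lneg[OF bil])
  have bca: "B (br b c) a = 1"
  proof -
    have "B (br b c) a = - B c (br b a)" by (rule invr)
    also have "\<dots> = - B (br b a) c" using symm by simp
    also have "\<dots> = B (br a b) c" using anti[of b a] neg by simp
    finally show ?thesis using abc by simp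
  qed
  have cab: "B (br c a) b = 1"
  proof -
    have "B (br c a) b = - B a (br c b)" by (rule invr)
    also have "\<dots> = - B (br c b) a" using symm by simp
    also have "\<dots> = B (br b c) a" using anti[of c b] neg by simp
    finally show ?thesis using bca by simp
  qed
  define f1 where "f1 = br b c"
  define f2 where "f2 = br c a"
  define f3 where "f3 = br a b"
  have fD: "f1 \<in> derived br" "f2 \<in> derived br" "f3 \<in> derived br" unfolding f1_def f2_def f3_def by (rule brD)+
  have ff0: "B f1 f1 = 0" "B f1 f2 = 0" "B f1 f3 = 0" "B f2 f1 = 0" "B f2 f2 = 0" "B f2 f3 = 0"
    "B f3 f1 = 0" "B f3 f2 = 0" "B f3 f3 = 0" using isoD fD by auto
  have fe: "B f1 a = 1" "B f1 b = 0" "B f1 c = 0" "B f2 a = 0" "B f2 b = 1" "B f2 c = 0"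
    "B f3 a = 0" "B f3 b = 0" "B f3 c = 1"
    unfolding f1_def f2_def f3_def using bca cab abc zl zr by auto
  have ef: "B a f1 = 1" "B b f1 = 0" "B c f1 = 0" "B a f2 = 0" "B b f2 = 1" "B c f2 = 0"
    "B a f3 = 0" "B b f3 = 0" "B c f3 = 1" using fe symm by metis+
  have ee: "B b a = B a b" "B c a = B a c" "B c b = B b c" using symm by metis+
  note bs = bilinear_ladd[OF bil] bilinear_radd[OF bil] bilinear_lmul[OF bil]
    bilinear_rmul[OF bil] bilinear_lsub[OF bil] bilinear_rsub[OF bil]
  define u1 where "u1 = a - (1/2) *\<^sub>R (B a a *\<^sub>R f1 + B a b *\<^sub>R f2 + B a c *\<^sub>R f3)"
  define u2 where "u2 = b - (1/2) *\<^sub>R (B b a *\<^sub>R f1 + B b b *\<^sub>R f2 + B b c *\<^sub>R f3)"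
  define u3 where "u3 = c - (1/2) *\<^sub>R (B c a *\<^sub>R f1 + B c b *\<^sub>R f2 + B c c *\<^sub>R f3)"
  have uf: "B u1 f1 = 1" "B u1 f2 = 0" "B u1 f3 = 0"
            "B u2 f1 = 0" "B u2 f2 = 1" "B u2 f3 = 0"
            "B u3 f1 = 0" "B u3 f2 = 0" "B u3 f3 = 1"
    unfolding u1_def u2_def u3_def by (simp_all add: bs ff0 ef)
  have uu: "\<forall>x\<in>{u1,u2,u3}. \<forall>y\<in>{u1,u2,u3}. B x y = 0"
    unfolding u1_def u2_def u3_def by (simp add: bs ff0 ef fe ee algebra_simps)
  have ff: "\<forall>x\<in>{f1,f2,f3}. \<forall>y\<in>{f1,f2,f3}. B x y = 0" using ff0 by simp
  have H: "subspace (span {u1,u2,u3}) \<and> span {u1,u2,u3} \<inter> span {f1,f2,f3} = {0} \<and>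
     span {u1,u2,u3} + span {f1,f2,f3} = UNIV \<and>
     totally_isotropic B (span {u1,u2,u3}) \<and> totally_isotropic B (span {f1,f2,f3}) \<and>
     dual_pair B (span {u1,u2,u3}) (span {f1,f2,f3}) \<and> nondegenerate B \<and> signature B = (3, 3)"
    by (rule hyp[OF assms(1) bil sym uu ff uf])
  define E where "E = {a,b,c,f1,f2,f3}"
  have EE: "a \<in> span E" "b \<in> span E" "c \<in> span E" "f1 \<in> span E" "f2 \<in> span E" "f3 \<in> span E"
    unfolding E_def by (auto intro: span_base)
  have "{u1,u2,u3} \<subseteq> span E"
    unfolding u1_def u2_def u3_def using EE
    by (auto intro!: span_diff span_add span_scale)
  then have sU: "span {u1,u2,u3} \<subseteq> span E" by (simp add: span_minimal)
  have "{f1,f2,f3} \<subseteq> span E" using EE by auto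
  then have sF: "span {f1,f2,f3} \<subseteq> span E" by (simp add: span_minimal)
  have allE: "x \<in> span E" for x
  proof -
    have "x \<in> span {u1,u2,u3} + span {f1,f2,f3}" using H by simp
    then obtain p q where "p \<in> span {u1,u2,u3}" "q \<in> span {f1,f2,f3}" "x = p + q"
      unfolding set_plus_def by blast
    then show ?thesis using sU sF by (auto intro: span_add)
  qed
  have brv: "br a b = f3" "br b c = f1" "br c a = f2" "br b a = - f3" "br c b = - f1" "br a c = - f2"
    unfolding f1_def f2_def f3_def using anti[of b a] anti[of c b] anti[of a c] by auto
  have brf: "br x f1 = 0" "br x f2 = 0" "br x f3 = 0" "br f1 x = 0" "br f2 x = 0" "br f3 x = 0" for x
    using nil nil2 fD by auto
  have FF: "f1 \<in> span {f1,f2,f3}" "f2 \<in> span {f1,f2,f3}" "f3 \<in> span {f1,f2,f3}"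
    by (auto intro: span_base)
  have brk: "br x y \<in> span {f1,f2,f3}" if "x \<in> E" "y \<in> E" for x y
    using that unfolding E_def
    by (auto simp: brv brf brr FF span_zero span_neg)
  have brall: "br x y \<in> span {f1,f2,f3}" for x y
  proof -
    have "\<forall>y. br x y \<in> span {f1,f2,f3}"
    proof (rule span_induct[OF allE[of x], where P="\<lambda>x. \<forall>y. br x y \<in> span {f1,f2,f3}"])
      show "subspace {x. \<forall>y. br x y \<in> span {f1, f2, f3}}" by (rule subspace_br[OF bbr]) simp
    next
      fix x assume x: "x \<in> E"
      show "\<forall>y. br x y \<in> span {f1,f2,f3}"
      proof
        fix y
        show "br x y \<in> span {f1,f2,f3}"
          by (rule span_induct[OF allE[of y], where P="\<lambda>y. br x y \<in> span {f1,f2,f3}"])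
            (use subspace_br_r[OF bbr, of "span {f1,f2,f3}" x] brk x in auto)
      qed
    qed
    then show ?thesis by blast
  qed
  have DF: "derived br = span {f1,f2,f3}"
  proof
    show "derived br \<subseteq> span {f1, f2, f3}"
      unfolding derived_def using brall by (intro span_minimal) auto
    show "span {f1, f2, f3} \<subseteq> derived br"
      using fD unfolding derived_def by (intro span_minimal) auto
  qed
  show ?thesis
    unfolding DF using H by blast
qed


end
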